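(* Let $\Sigma$ be a finite totally ordered alphabet, let $n\ge 1$ be an integer, and for every $c\in\Sigma$ let $n_c\ge 0$ be an integer, with $\sum_{c\in\Sigma}n_c=n-1$. Let $\mathcal U$ be the set of tries with $n$ nodes over $\Sigma$ in which, for every $c\in\Sigma$, exactly $n_c$ edges are labeled by $c$. Then $$|\mathcal U|=\frac{1}{n}\prod_{c\in\Sigma}\binom{n}{n_c}.$$
   Context: A trie (cardinal tree) over a finite totally ordered alphabet $\Sigma$ is a rooted ordered tree whose edges are labeled by symbols of $\Sigma$ such that (i) the labels of the edges leaving any node are pairwise distinct and (ii) siblings are ordered by the labels of their incoming edges. Two tries are the same if they are equal as edge-labeled rooted trees. *)

theory Defs
  imports Complex_Main
begin

text \<open>A trie (cardinal tree) over an alphabet: a rooted ordered tree whose edges carry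
labels.\<close>

datatype 'a trie = Node "('a \<times> 'a trie) list"

fun trie_wf :: "'a::linorder set \<Rightarrow> 'a trie \<Rightarrow> bool" where
  "trie_wf S (Node xs) =
     (sorted_wrt (<) (map fst xs) \<and> set (map fst xs) \<subseteq> S \<and>
      (\<forall>p \<in> set xs. trie_wf S (snd p)))"

fun trie_nodes :: "'a trie \<Rightarrow> nat" where
  "trie_nodes (Node xs) = 1 + sum_list (map (\<lambda>p. trie_nodes (snd p)) xs)"

fun trie_label_count :: "'a \<Rightarrow> 'a trie \<Rightarrow> nat" where
  "trie_label_count c (Node xs) =
     length (filter (\<lambda>p. fst p = c) xs) + sum_list (map (\<lambda>p. trie_label_count c (snd p)) xs)"

end

theory Submission
  imports Defs
begin


lemma pow_insert_sum:
  fixes g :: "'a set \<Rightarrow> real"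
  assumes "finite F" "x \<notin> F"
  shows "(\<Sum>A\<in>Pow (insert x F). g A) = (\<Sum>A\<in>Pow F. g A + g (insert x A))"
proof -
  have d: "Pow F \<inter> insert x ` Pow F = {}" using assms(2) by auto
  have i: "inj_on (insert x) (Pow F)" using assms(2) unfolding inj_on_def by (meson PowD insert_ident subsetD)
  have "(\<Sum>A\<in>Pow (insert x F). g A) = (\<Sum>A\<in>Pow F. g A) + (\<Sum>A\<in>insert x ` Pow F. g A)"
    unfolding Pow_insert using assms(1) d by (simp add: sum.union_disjoint)
  also have "(\<Sum>A\<in>insert x ` Pow F. g A) = (\<Sum>A\<in>Pow F. g (insert x A))"
    using sum.reindex[OF i] by simp
  finally show ?thesis by (simp add: sum.distrib)
qed

lemma prod_ins_F:
  fixes h :: "'a \<Rightarrow> bool \<Rightarrow> real"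
  assumes "finite F" "x \<notin> F" "A \<subseteq> F"
  shows "(\<Prod>c\<in>insert x F. h c (c \<in> A)) = h x False * (\<Prod>c\<in>F. h c (c \<in> A))"
    and "(\<Prod>c\<in>insert x F. h c (c \<in> insert x A)) = h x True * (\<Prod>c\<in>F. h c (c \<in> A))"
proof -
  show "(\<Prod>c\<in>insert x F. h c (c \<in> A)) = h x False * (\<Prod>c\<in>F. h c (c \<in> A))"
  proof -
    have "x \<notin> A" using assms by blast
    then show ?thesis using assms by (simp add: prod.insert)
  qed
  have "(\<Prod>c\<in>F. h c (c \<in> insert x A)) = (\<Prod>c\<in>F. h c (c \<in> A))"
  proof (rule prod.cong[OF refl])
    fix c assume "c \<in> F"
    then have "c \<noteq> x" using assms(2) by blast
    then show "h c (c \<in> insert x A) = h c (c \<in> A)" by simp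
  qed
  then show "(\<Prod>c\<in>insert x F. h c (c \<in> insert x A)) = h x True * (\<Prod>c\<in>F. h c (c \<in> A))"
    using assms by (simp add: prod.insert)
qed

lemma L1:
  fixes h :: "'a \<Rightarrow> bool \<Rightarrow> real"
  assumes "finite S"
  shows "(\<Sum>A\<in>Pow S. \<Prod>c\<in>S. h c (c \<in> A)) = (\<Prod>c\<in>S. h c True + h c False)"
  using assms
proof (induction S rule: finite_induct)
  case empty then show ?case by simp
next
  case (insert x F)
  have "(\<Sum>A\<in>Pow (insert x F). \<Prod>c\<in>insert x F. h c (c \<in> A)) =
     (\<Sum>A\<in>Pow F. (\<Prod>c\<in>insert x F. h c (c \<in> A)) + (\<Prod>c\<in>insert x F. h c (c \<in> insert x A)))"
    by (rule pow_insert_sum[OF insert(1,2)])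
  also have "\<dots> = (\<Sum>A\<in>Pow F. (h x True + h x False) * (\<Prod>c\<in>F. h c (c \<in> A)))"
  proof (rule sum.cong[OF refl])
    fix A assume "A \<in> Pow F"
    then have "A \<subseteq> F" by simp
    note p = prod_ins_F[OF insert(1,2) this, of h]
    show "(\<Prod>c\<in>insert x F. h c (c \<in> A)) + (\<Prod>c\<in>insert x F. h c (c \<in> insert x A)) = (h x True + h x False) * (\<Prod>c\<in>F. h c (c \<in> A))"
      unfolding p by (simp add: algebra_simps)
  qed
  also have "\<dots> = (h x True + h x False) * (\<Prod>c\<in>F. h c True + h c False)"
    using insert(3) by (simp add: sum_distrib_left[symmetric])
  finally show ?case using insert by simp
qed

lemma L2:
  fixes h :: "'a \<Rightarrow> bool \<Rightarrow> real"
  assumes "finite S"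
  shows "(\<Sum>A\<in>Pow S. real (card A) * (\<Prod>c\<in>S. h c (c \<in> A))) =
         (\<Sum>c\<in>S. h c True * (\<Prod>d\<in>S-{c}. h d True + h d False))"
  using assms
proof (induction S rule: finite_induct)
  case empty then show ?case by simp
next
  case (insert x F)
  have cI: "A \<in> Pow F \<Longrightarrow> card (insert x A) = card A + 1" for A
    using insert(1,2) finite_subset by (metis PowD card_insert_disjoint subsetD Suc_eq_plus1)
  have "(\<Sum>A\<in>Pow (insert x F). real (card A) * (\<Prod>c\<in>insert x F. h c (c \<in> A))) =
     (\<Sum>A\<in>Pow F. real (card A) * (\<Prod>c\<in>insert x F. h c (c \<in> A)) + real (card (insert x A)) * (\<Prod>c\<in>insert x F. h c (c \<in> insert x A)))"
    by (rule pow_insert_sum[OF insert(1,2)])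
  also have "\<dots> = (\<Sum>A\<in>Pow F. (h x True + h x False) * (real (card A) * (\<Prod>c\<in>F. h c (c \<in> A))) + h x True * (\<Prod>c\<in>F. h c (c \<in> A)))"
  proof (rule sum.cong[OF refl])
    fix A assume A: "A \<in> Pow F"
    then have "A \<subseteq> F" by simp
    note p = prod_ins_F[OF insert(1,2) this, of h]
    show "real (card A) * (\<Prod>c\<in>insert x F. h c (c \<in> A)) + real (card (insert x A)) * (\<Prod>c\<in>insert x F. h c (c \<in> insert x A)) = (h x True + h x False) * (real (card A) * (\<Prod>c\<in>F. h c (c \<in> A))) + h x True * (\<Prod>c\<in>F. h c (c \<in> A))"
      unfolding p cI[OF A] by (simp add: algebra_simps)
  qed
  also have "\<dots> = (h x True + h x False) * (\<Sum>c\<in>F. h c True * (\<Prod>d\<in>F-{c}. h d True + h d False))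
       + h x True * (\<Prod>c\<in>F. h c True + h c False)"
    using insert(3) L1[OF insert(1), of h] by (simp add: sum.distrib sum_distrib_left[symmetric])
  also have "\<dots> = (\<Sum>c\<in>insert x F. h c True * (\<Prod>d\<in>insert x F-{c}. h d True + h d False))"
  proof -
    have e1: "insert x F - {x} = F" using insert(2) by auto
    have "(\<Sum>c\<in>F. h c True * (\<Prod>d\<in>insert x F-{c}. h d True + h d False)) =
          (\<Sum>c\<in>F. (h x True + h x False) * (h c True * (\<Prod>d\<in>F-{c}. h d True + h d False)))"
    proof (rule sum.cong[OF refl])
      fix c assume "c \<in> F"
      then have "insert x F - {c} = insert x (F - {c})" using insert(2) by auto
      then show "h c True * (\<Prod>d\<in>insert x F-{c}. h d True + h d False) =
          (h x True + h x False) * (h c True * (\<Prod>d\<in>F-{c}. h d True + h d False))"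
        using insert(1,2) by (simp add: prod.insert)
    qed
    then show ?thesis using insert(1,2) e1 by (simp add: sum_distrib_left)
  qed
  finally show ?case .
qed


definition fo :: "'a::linorder set \<Rightarrow> nat \<Rightarrow> nat \<Rightarrow> ('a \<Rightarrow> nat) \<Rightarrow> 'a trie list set" where
  "fo S k N m = {ts. length ts = k \<and> (\<forall>t\<in>set ts. trie_wf S t) \<and>
     sum_list (map trie_nodes ts) = N \<and> (\<forall>c\<in>S. sum_list (map (trie_label_count c) ts) = m c)}"

definition bld :: "'a::linorder set \<Rightarrow> 'a trie list \<Rightarrow> 'a trie list" where
  "bld A us = Node (zip (sorted_list_of_set A) (take (card A) us)) # drop (card A) us"

lemma fo_0: "fo S 0 N m = (if N = 0 \<and> (\<forall>c\<in>S. m c = 0) then {[]} else {})"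
  by (auto simp: fo_def)

lemma len_filter_distinct:
  "distinct l \<Longrightarrow> length (filter (\<lambda>x. x = c) l) = (if c \<in> set l then 1 else 0)"
  by (induction l) auto

lemma filter_fst: "distinct (map fst xs) \<Longrightarrow> length (filter (\<lambda>p. fst p = c) xs) = (if c \<in> set (map fst xs) then 1 else 0)"
  by (induction xs) auto

lemma sum_snd: "sum_list (map (\<lambda>p. f (snd p)) xs) = sum_list (map f (map snd xs))"
  by (induction xs) auto

lemma fo_nodes_ge: "trie_nodes t \<ge> 1"
  by (cases t) auto

lemma decomp:
  assumes "finite S"
  shows "fo S (Suc k) (Suc N) m = (\<Union>A\<in>{A. A \<subseteq> S \<and> (\<forall>c\<in>A. 0 < m c)}.
            bld A ` fo S (k + card A) N (\<lambda>c. m c - (if c \<in> A then 1 else 0)))"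
proof
  show "fo S (Suc k) (Suc N) m \<subseteq> (\<Union>A\<in>{A. A \<subseteq> S \<and> (\<forall>c\<in>A. 0 < m c)}.
            bld A ` fo S (k + card A) N (\<lambda>c. m c - (if c \<in> A then 1 else 0)))"
  proof
    fix ts assume ts: "ts \<in> fo S (Suc k) (Suc N) m"
    then obtain t rest where tr: "ts = t # rest" and lr: "length rest = k"
      unfolding fo_def by (cases ts) auto
    obtain xs where t: "t = Node xs" by (cases t) auto
    define A where "A = set (map fst xs)"
    define us where "us = map snd xs @ rest"
    have wf: "trie_wf S t" "\<forall>t\<in>set rest. trie_wf S t" using ts tr by (auto simp: fo_def)
    have sw: "sorted_wrt (<) (map fst xs)" and AS: "A \<subseteq> S"
      and wfs: "\<forall>p\<in>set xs. trie_wf S (snd p)"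
      using wf(1) by (auto simp: t A_def)
    have dist: "distinct (map fst xs)" using sw strict_sorted_iff by blast
    have sl: "sorted_list_of_set A = map fst xs"
      unfolding A_def using sw strict_sorted_iff sorted_list_of_set.idem_if_sorted_distinct by blast
    have cA: "card A = length xs" unfolding A_def using dist distinct_card by fastforce
    have bl: "bld A us = ts"
      unfolding bld_def sl cA us_def tr t by (simp add: zip_map_fst_snd)
    have cnt: "\<forall>c\<in>S. sum_list (map (trie_label_count c) ts) = m c"
      and nds: "sum_list (map trie_nodes ts) = Suc N" using ts by (auto simp: fo_def)
    have cnt1: "sum_list (map (trie_label_count c) ts) =
       (if c \<in> A then 1 else 0) + sum_list (map (trie_label_count c) us)" for c
      unfolding tr t us_def A_def
      by (simp add: filter_fst[OF dist] sum_snd)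
    have pos: "\<forall>c\<in>A. 0 < m c" using cnt cnt1 AS by fastforce
    have "us \<in> fo S (k + card A) N (\<lambda>c. m c - (if c \<in> A then 1 else 0))"
      unfolding fo_def
    proof (intro CollectI conjI ballI)
      show "length us = k + card A" using lr cA us_def by simp
      show "trie_wf S u" if "u \<in> set us" for u using that wfs wf(2) us_def by auto
      show "sum_list (map trie_nodes us) = N"
        using nds unfolding tr t us_def by (simp add: sum_snd)
      show "sum_list (map (trie_label_count c) us) = m c - (if c \<in> A then 1 else 0)"
        if "c \<in> S" for c using cnt1[of c] cnt that by auto
    qed
    then show "ts \<in> (\<Union>A\<in>{A. A \<subseteq> S \<and> (\<forall>c\<in>A. 0 < m c)}.
            bld A ` fo S (k + card A) N (\<lambda>c. m c - (if c \<in> A then 1 else 0)))"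
      using AS pos bl by blast
  qed
next
  show "(\<Union>A\<in>{A. A \<subseteq> S \<and> (\<forall>c\<in>A. 0 < m c)}.
            bld A ` fo S (k + card A) N (\<lambda>c. m c - (if c \<in> A then 1 else 0))) \<subseteq> fo S (Suc k) (Suc N) m"
  proof clarify
    fix A us assume AS: "A \<subseteq> S" and pos: "\<forall>c\<in>A. 0 < m c"
      and us: "us \<in> fo S (k + card A) N (\<lambda>c. m c - (if c \<in> A then 1 else 0))"
    have fA: "finite A" using AS assms finite_subset by blast
    define xs where "xs = zip (sorted_list_of_set A) (take (card A) us)"
    have lu: "length us = k + card A" using us by (simp add: fo_def)
    have mf: "map fst xs = sorted_list_of_set A" unfolding xs_def using lu fA by simp
    have ms: "map snd xs = take (card A) us" unfolding xs_def using lu fA by simp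
    have dist: "distinct (map fst xs)" using mf by simp
    have sA: "set (map fst xs) = A" using mf fA by simp
    then have sA': "fst ` set xs = A" by simp
    have wfu: "\<forall>t\<in>set us. trie_wf S t" using us by (simp add: fo_def)
    have ust: "us = map snd xs @ drop (card A) us" using ms by simp
    have wfx: "\<forall>p\<in>set xs. trie_wf S (snd p)"
    proof
      fix p assume "p \<in> set xs"
      then have "snd p \<in> set (map snd xs)" by simp
      then have "snd p \<in> set us" using ms by (metis in_set_takeD)
      then show "trie_wf S (snd p)" using wfu by blast
    qed
    have bl: "bld A us = Node xs # drop (card A) us" unfolding bld_def xs_def by simp
    have cnt1: "sum_list (map (trie_label_count c) (bld A us)) =
       (if c \<in> A then 1 else 0) + sum_list (map (trie_label_count c) us)" for c
      apply (subst (2) ust)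
      unfolding bl
      by (simp add: filter_fst[OF dist] sum_snd sA')
    show "bld A us \<in> fo S (Suc k) (Suc N) m"
      unfolding fo_def
    proof (intro CollectI conjI ballI)
      show "length (bld A us) = Suc k" using lu by (simp add: bld_def)
      show "trie_wf S t" if "t \<in> set (bld A us)" for t
      proof -
        have "t = Node xs \<or> t \<in> set (drop (card A) us)" using that bl by simp
        then show ?thesis
        proof
          assume "t = Node xs"
          then show ?thesis using wfx mf AS fA by simp
        next
          assume "t \<in> set (drop (card A) us)"
          then show ?thesis using wfu by (meson in_set_dropD)
        qed
      qed
      show "sum_list (map trie_nodes (bld A us)) = Suc N"
      proof -
        have "sum_list (map trie_nodes us) = N" using us by (simp add: fo_def)
        then show ?thesis apply (subst (asm) ust) unfolding bl by (simp add: sum_snd)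
      qed
      show "sum_list (map (trie_label_count c) (bld A us)) = m c" if "c \<in> S" for c
      proof -
        have "sum_list (map (trie_label_count c) us) = m c - (if c \<in> A then 1 else 0)"
          using us that by (simp add: fo_def)
        then show ?thesis using cnt1[of c] pos by auto
      qed
    qed
  qed
qed

lemma bld_root: "finite A \<Longrightarrow> card A \<le> length us \<Longrightarrow>
   \<exists>xs. bld A us = Node xs # drop (card A) us \<and> map fst xs = sorted_list_of_set A \<and> map snd xs = take (card A) us"
  unfolding bld_def by simp

lemma bld_inj: assumes "finite A" "card A \<le> length us" "card A \<le> length vs" "bld A us = bld A vs"
  shows "us = vs"
proof -
  obtain xs where x: "bld A us = Node xs # drop (card A) us" "map snd xs = take (card A) us"
    using bld_root[OF assms(1,2)] by blast
  obtain ys where y: "bld A vs = Node ys # drop (card A) vs" "map snd ys = take (card A) vs"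
    using bld_root[OF assms(1,3)] by blast
  have "xs = ys" "drop (card A) us = drop (card A) vs" using x y assms(4) by auto
  then show ?thesis using x y by (metis append_take_drop_id)
qed

lemma bld_disj: assumes "finite A" "finite B" "card A \<le> length us" "card B \<le> length vs" "bld A us = bld B vs"
  shows "A = B"
proof -
  obtain xs where x: "bld A us = Node xs # drop (card A) us" "map fst xs = sorted_list_of_set A"
    using bld_root[OF assms(1,3)] by blast
  obtain ys where y: "bld B vs = Node ys # drop (card B) vs" "map fst ys = sorted_list_of_set B"
    using bld_root[OF assms(2,4)] by blast
  have "xs = ys" using x y assms(5) by auto
  then have "sorted_list_of_set A = sorted_list_of_set B" using x y by simp
  then show ?thesis using assms(1,2) sorted_list_of_set_inject by blast
qed

lemma fo_finite: assumes "finite S" shows "finite (fo S k N m)"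
proof (induction N arbitrary: k m)
  case 0
  show ?case
  proof (cases k)
    case 0 then show ?thesis by (simp add: fo_0)
  next
    case (Suc k')
    have "ts \<notin> fo S k 0 m" for ts
    proof
      assume "ts \<in> fo S k 0 m"
      then have "length ts = Suc k'" "sum_list (map trie_nodes ts) = 0" using Suc by (auto simp: fo_def)
      then obtain t r where "ts = t # r" by (cases ts) auto
      then show False using \<open>sum_list (map trie_nodes ts) = 0\<close> fo_nodes_ge[of t] by simp
    qed
    then have "fo S k 0 m = {}" by blast
    then show ?thesis by simp
  qed
next
  case (Suc N)
  show ?case
  proof (cases k)
    case 0 then show ?thesis by (simp add: fo_0)
  next
    case (Suc k')
    have fin: "finite {A. A \<subseteq> S \<and> (\<forall>c\<in>A. 0 < m c)}" using assms by simp
    show ?thesis unfolding Suc decomp[OF assms] using fin Suc.IH by blast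
  qed
qed

lemma card_decomp:
  assumes "finite S"
  shows "card (fo S (Suc k) (Suc N) m) = (\<Sum>A\<in>{A. A \<subseteq> S \<and> (\<forall>c\<in>A. 0 < m c)}.
            card (fo S (k + card A) N (\<lambda>c. m c - (if c \<in> A then 1 else 0))))"
proof -
  let ?I = "{A. A \<subseteq> S \<and> (\<forall>c\<in>A. 0 < m c)}"
  let ?F = "\<lambda>A. fo S (k + card A) N (\<lambda>c. m c - (if c \<in> A then 1 else 0))"
  have fin: "finite ?I" using assms by simp
  have fA: "A \<in> ?I \<Longrightarrow> finite A" for A using assms finite_subset by blast
  have len: "us \<in> ?F A \<Longrightarrow> card A \<le> length us" for A us by (simp add: fo_def)
  have "card (\<Union>A\<in>?I. bld A ` ?F A) = (\<Sum>A\<in>?I. card (bld A ` ?F A))"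
  proof (rule card_UN_disjoint[OF fin])
    show "\<forall>A\<in>?I. finite (bld A ` ?F A)" using fo_finite[OF assms] by blast
    show "\<forall>A\<in>?I. \<forall>B\<in>?I. A \<noteq> B \<longrightarrow> bld A ` ?F A \<inter> bld B ` ?F B = {}"
    proof (intro ballI impI)
      fix A B assume AB: "A \<in> ?I" "B \<in> ?I" "A \<noteq> B"
      show "bld A ` ?F A \<inter> bld B ` ?F B = {}"
      proof (rule ccontr)
        assume "bld A ` ?F A \<inter> bld B ` ?F B \<noteq> {}"
        then obtain us vs where "us \<in> ?F A" "vs \<in> ?F B" "bld A us = bld B vs" by blast
        then have "A = B" using bld_disj[OF fA[OF AB(1)] fA[OF AB(2)] len len] by blast
        then show False using AB(3) by blast
      qed
    qed
  qed
  also have "\<dots> = (\<Sum>A\<in>?I. card (?F A))"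
  proof (rule sum.cong[OF refl])
    fix A assume "A \<in> ?I"
    then have "inj_on (bld A) (?F A)" unfolding inj_on_def using bld_inj[OF fA len len] by blast
    then show "card (bld A ` ?F A) = card (?F A)" by (rule card_image)
  qed
  finally show ?thesis using decomp[OF assms] by simp
qed


lemma sum_ind_card: "finite S \<Longrightarrow> A \<subseteq> S \<Longrightarrow> (\<Sum>c\<in>S. (if c \<in> A then 1 else 0::nat)) = card A"
proof -
  assume "finite S" "A \<subseteq> S"
  then have "(\<Sum>c\<in>S. (if c \<in> A then 1 else 0::nat)) = card (S \<inter> A)"
    by (simp add: sum.If_cases Int_def)
  then show ?thesis using \<open>A \<subseteq> S\<close> by (simp add: Int_absorb1)
qed

lemma count_main:
  assumes S: "finite S"
  shows "(\<Sum>c\<in>S. m c) + k = N \<Longrightarrow>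
    real (card (fo S k N m)) * real N = real k * (\<Prod>c\<in>S. real (N choose m c))"
proof (induction N arbitrary: k m)
  case 0 then show ?case by simp
next
  case (Suc N)
  show ?case
  proof (cases k)
    case 0 then show ?thesis by (simp add: fo_0)
  next
    case (Suc k')
    let ?I = "{A. A \<subseteq> S \<and> (\<forall>c\<in>A. 0 < m c)}"
    let ?mA = "\<lambda>A c. m c - (if c \<in> A then 1 else 0)"
    have cd: "card (fo S (Suc k') (Suc N) m) = (\<Sum>A\<in>?I. card (fo S (k' + card A) N (?mA A)))"
      by (rule card_decomp[OF S])
    have sumA: "(\<Sum>c\<in>S. ?mA A c) + (k' + card A) = N" if A: "A \<in> ?I" for A
    proof -
      have "(\<Sum>c\<in>S. ?mA A c) + card A = (\<Sum>c\<in>S. ?mA A c + (if c \<in> A then 1 else 0))"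
        using sum_ind_card[OF S, of A] A by (simp add: sum.distrib)
      also have "\<dots> = (\<Sum>c\<in>S. m c)"
        by (rule sum.cong[OF refl]) (use A in auto)
      finally show ?thesis using Suc.prems Suc by simp
    qed
    show ?thesis
    proof (cases N)
      case 0
      then have k0: "k' = 0" and m0: "\<forall>c\<in>S. m c = 0" using Suc.prems Suc S by auto
      have I: "?I = {{}}" using m0 by fastforce
      have "card (fo S (Suc k') (Suc N) m) = 1"
        unfolding cd I using 0 k0 m0 by (simp add: fo_0)
      then show ?thesis using Suc 0 m0 k0 by simp
    next
      case (Suc N')
      define h where "h c b = real (if b then (if m c = 0 then 0 else N choose (m c - 1)) else N choose m c)" for c b
      have hA: "(\<Prod>c\<in>S. real (N choose ?mA A c)) = (\<Prod>c\<in>S. h c (c \<in> A))" if "A \<in> ?I" for A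
        by (rule prod.cong[OF refl]) (use that in \<open>auto simp: h_def\<close>)
      have h0: "(\<Prod>c\<in>S. h c (c \<in> A)) = 0" if AI: "A \<in> Pow S - ?I" for A
      proof -
        obtain c where "c \<in> A" "m c = 0" "c \<in> S" using AI by blast
        then show ?thesis using S by (auto simp: h_def intro!: prod_zero)
      qed
      have "real (card (fo S (Suc k') (Suc N) m)) * real N =
          (\<Sum>A\<in>?I. real (card (fo S (k' + card A) N (?mA A))) * real N)"
        unfolding cd by (simp add: sum_distrib_right)
      also have "\<dots> = (\<Sum>A\<in>?I. (real k' + real (card A)) * (\<Prod>c\<in>S. h c (c \<in> A)))"
        by (rule sum.cong[OF refl]) (simp add: Suc.IH[OF sumA] hA)
      also have "\<dots> = (\<Sum>A\<in>Pow S. (real k' + real (card A)) * (\<Prod>c\<in>S. h c (c \<in> A)))"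
        by (rule sum.mono_neutral_left) (use S h0 in auto)
      also have "\<dots> = real k' * (\<Prod>c\<in>S. h c True + h c False) +
           (\<Sum>c\<in>S. h c True * (\<Prod>d\<in>S-{c}. h d True + h d False))"
        using L1[OF S, of h] L2[OF S, of h]
        by (simp add: algebra_simps sum.distrib sum_distrib_left[symmetric])
      finally have E: "real (card (fo S (Suc k') (Suc N) m)) * real N = \<dots>" .
      let ?B = "\<lambda>c. real (Suc N choose m c)"
      have hs: "h c True + h c False = ?B c" for c
        by (cases "m c") (auto simp: h_def)
      have ht: "real (Suc N) * h c True = real (m c) * ?B c" for c
      proof (cases "m c")
        case 0 then show ?thesis by (simp add: h_def)
      next
        case (Suc j)
        have "Suc j * (Suc N choose Suc j) = Suc N * (N choose j)" by (rule Suc_times_binomial)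
        then have "real (Suc j) * real (Suc N choose Suc j) = real (Suc N) * real (N choose j)"
          by (metis of_nat_mult)
        then show ?thesis using Suc by (simp add: h_def)
      qed
      have "real (Suc N) * (\<Sum>c\<in>S. h c True * (\<Prod>d\<in>S-{c}. h d True + h d False))
          = (\<Sum>c\<in>S. real (m c) * (\<Prod>d\<in>S. ?B d))"
        unfolding sum_distrib_left
      proof (rule sum.cong[OF refl])
        fix c assume c: "c \<in> S"
        have "real (Suc N) * (h c True * (\<Prod>d\<in>S-{c}. h d True + h d False))
            = (real (Suc N) * h c True) * (\<Prod>d\<in>S-{c}. ?B d)" by (simp add: hs)
        also have "\<dots> = real (m c) * (?B c * (\<Prod>d\<in>S-{c}. ?B d))" using ht[of c] by (simp only: mult.assoc)
        also have "\<dots> = real (m c) * (\<Prod>d\<in>S. ?B d)" using prod.remove[OF S c, of ?B] by simp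
        finally show "real (Suc N) * (h c True * (\<Prod>d\<in>S-{c}. h d True + h d False)) = real (m c) * (\<Prod>d\<in>S. ?B d)" .
      qed
      also have "\<dots> = real (N - k') * (\<Prod>d\<in>S. ?B d)"
      proof -
        have "(\<Sum>c\<in>S. m c) = N - k'" using Suc.prems \<open>k = Suc k'\<close> by simp
        then show ?thesis by (simp add: sum_distrib_right[symmetric] flip: of_nat_sum)
      qed
      finally have F: "real (Suc N) * (\<Sum>c\<in>S. h c True * (\<Prod>d\<in>S-{c}. h d True + h d False))
          = real (N - k') * (\<Prod>d\<in>S. ?B d)" .
      have kN: "k' \<le> N" using Suc.prems \<open>k = Suc k'\<close> by simp
      have "real (card (fo S (Suc k') (Suc N) m)) * real (Suc N) * real N
          = real (Suc k') * (\<Prod>d\<in>S. ?B d) * real N"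
      proof -
        have "real (card (fo S (Suc k') (Suc N) m)) * real (Suc N) * real N
            = real (Suc N) * (real k' * (\<Prod>d\<in>S. ?B d)) + real (N - k') * (\<Prod>d\<in>S. ?B d)"
        proof -
          have P: "(\<Prod>c\<in>S. h c True + h c False) = (\<Prod>d\<in>S. ?B d)" by (simp only: hs)
          have "real (card (fo S (Suc k') (Suc N) m)) * real (Suc N) * real N
             = real (Suc N) * (real (card (fo S (Suc k') (Suc N) m)) * real N)" by simp
          also have "\<dots> = real (Suc N) * (real k' * (\<Prod>d\<in>S. ?B d)) +
             real (Suc N) * (\<Sum>c\<in>S. h c True * (\<Prod>d\<in>S-{c}. h d True + h d False))"
            unfolding E P by (simp only: distrib_left)
          finally show ?thesis unfolding F .
        qed
        also have "\<dots> = real (Suc k') * (\<Prod>d\<in>S. ?B d) * real N"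
          using kN by (simp add: of_nat_diff algebra_simps)
        finally show ?thesis .
      qed
      then show ?thesis using \<open>k = Suc k'\<close> \<open>N = Suc N'\<close> by simp
    qed
  qed
qed

lemma fo_one: "fo S 1 n nc = (\<lambda>t. [t]) ` {t. trie_wf S t \<and> trie_nodes t = n \<and>
                          (\<forall>c\<in>S. trie_label_count c t = nc c)}"
  by (auto simp: fo_def length_Suc_conv)

theorem theorem1:
  fixes S :: "'a::linorder set" and n :: nat and nc :: "'a \<Rightarrow> nat"
  assumes "finite S" and "n \<ge> 1"
    and "(\<Sum>c\<in>S. nc c) = n - 1"
  shows "real (card {t. trie_wf S t \<and> trie_nodes t = n \<and>
                          (\<forall>c\<in>S. trie_label_count c t = nc c)})
         = (1 / real n) * (\<Prod>c\<in>S. real (n choose nc c))"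
proof -
  let ?U = "{t. trie_wf S t \<and> trie_nodes t = n \<and> (\<forall>c\<in>S. trie_label_count c t = nc c)}"
  have "inj_on (\<lambda>t. [t]) ?U" unfolding inj_on_def by blast
  then have c: "card (fo S 1 n nc) = card ?U" unfolding fo_one by (rule card_image)
  have "real (card (fo S 1 n nc)) * real n = real 1 * (\<Prod>c\<in>S. real (n choose nc c))"
    by (rule count_main[OF assms(1)]) (use assms(2,3) in simp)
  then have "real (card ?U) * real n = (\<Prod>c\<in>S. real (n choose nc c))" using c by simp
  moreover have "real n > 0" using assms(2) by simp
  ultimately show ?thesis by (simp add: field_simps)
qed

end
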